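(* Fix $a,b\in(0,1)$ and $n\in\mathbb{N}\cup\{\infty\}$. Consider the spread process $\{f_t\}$ with parameters $(\mathcal{P}_n,v_0,\mathcal{P}_n,a,b)$ and let $i_t$ be the index of the truth frontier after round $t$. Then for every $t\ge 1$ the random variable $i_t$ stochastically dominates $\min\{\mathrm{Bin}(t-1,b),\,n\}$, i.e. $\Pr[i_t\ge x]\ge \Pr[\min\{\mathrm{Bin}(t-1,b),n\}\ge x]$ for all real $x$. In particular, there exist constants $K,c_1,c_2,c_3>0$ depending only on $a,b$ such that for all $t\ge1$, $$\Pr\big[i_t\ \ge\ \min\{bt-Kt^{1-c_3},\,n\}\big]\ \ge\ 1-e^{-c_1t^{c_2}}.$$
   Context: Spread process. Fix $a,b\in[0,1]$. Let $G=(V,E)$ be a connected, locally finite, undirected graph (finite or countably infinite), $r\in V$ a root, and $T$ a breadth-first-search (BFS) spanning tree of $G$ rooted at $r$ (i.e. $d_T(r,v)=d_G(r,v)$ for all $v$). Orient $T$ away from $r$; for $v\ne r$ let $p(v)$ be its parent in $T$. The spread process with parameters $(G,r,T,a,b)$ is the random sequence of maps $f_t:V\to\{+1,-1,\bot\}$, $t\in\mathbb{N}$, defined by: $f_t(r)=+1$ for all $t$; $f_0(v)=\bot$ for $v\neq r$; for $t\ge1$ and each $v\ne r$, independently of everything else: if $f_{t-1}(v)=\bot\ne f_{t-1}(p(v))$ then $f_t(v)=f_{t-1}(p(v))$ with probability $1-a$ and $f_t(v)=-f_{t-1}(p(v))$ with probability $a$; if $f_{t-1}(v)\ne\bot$ then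 $f_t(v)=f_{t-1}(p(v))$ with probability $b$ and $f_t(v)=f_{t-1}(v)$ with probability $1-b$; if $f_{t-1}(v)=f_{t-1}(p(v))=\bot$ then $f_t(v)=\bot$. Path. For $n\in\mathbb{N}\cup\{\infty\}$, $\mathcal{P}_n$ is the path with vertices $v_0,v_1,\dots,v_n$ (infinitely many if $n=\infty$), rooted at $v_0$, with $p(v_i)=v_{i-1}$; it is its own BFS tree, and the process on it has parameters $(\mathcal{P}_n,v_0,\mathcal{P}_n,a,b)$. Truth frontier on the path. After round $t$, the truth frontier is the single node $v_{i_t}$ where $i_t=\max\{i: 0\le i\le n,\ f_t(v_0)=f_t(v_1)=\dots=f_t(v_i)=+1\}$. *)

theory Defs
  imports "HOL-Probability.Probability" "HOL-Library.Extended_Real"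
begin

text \<open>Opinion values: +1, -1 and bottom (uninformed).\<close>
datatype opinion = Pos | Neg | Bot

fun flip :: "opinion \<Rightarrow> opinion" where
  "flip Pos = Neg" | "flip Neg = Pos" | "flip Bot = Bot"

text \<open>The path P_n with n :: enat (n = \<infinity> for the infinite path). Vertex v_i is the
  natural number i with enat i \<le> n; configurations are maps nat \<Rightarrow> opinion,
  indices beyond n are permanently Bot. The parent of v_i (i \<ge> 1) is v_(i-1).\<close>

definition spread_init :: "nat \<Rightarrow> opinion" where
  "spread_init = (\<lambda>i. if i = 0 then Pos else Bot)"

definition local_update :: "real \<Rightarrow> real \<Rightarrow> (nat \<Rightarrow> opinion) \<Rightarrow> nat \<Rightarrow> opinion pmf" where
  "local_update a b f i =
     (if f i = Bot \<and> f (i - 1) \<noteq> Bot then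
        map_pmf (\<lambda>c. if c then flip (f (i - 1)) else f (i - 1)) (bernoulli_pmf a)
      else if f i \<noteq> Bot then
        map_pmf (\<lambda>c. if c then f (i - 1) else f i) (bernoulli_pmf b)
      else return_pmf Bot)"

text \<open>Vertices whose value and
  parent value are both Bot stay Bot deterministically, so only the (finitely many)
  active vertices need random choices; the root stays +1.\<close>
definition spread_step :: "enat \<Rightarrow> real \<Rightarrow> real \<Rightarrow> (nat \<Rightarrow> opinion) \<Rightarrow> (nat \<Rightarrow> opinion) pmf" where
  "spread_step n a b f =
     map_pmf (\<lambda>g. g(0 := Pos))
       (Pi_pmf {i. 1 \<le> i \<and> enat i \<le> n \<and> (f i \<noteq> Bot \<or> f (i - 1) \<noteq> Bot)} Bot
          (local_update a b f))"

primrec spread_dist :: "enat \<Rightarrow> real \<Rightarrow> real \<Rightarrow> nat \<Rightarrow> (nat \<Rightarrow> opinion) pmf" where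
  "spread_dist n a b 0 = return_pmf spread_init"
| "spread_dist n a b (Suc t) = bind_pmf (spread_dist n a b t) (spread_step n a b)"

definition truth_frontier :: "enat \<Rightarrow> (nat \<Rightarrow> opinion) \<Rightarrow> nat" where
  "truth_frontier n f = Max {i. enat i \<le> n \<and> (\<forall>j\<le>i. f j = Pos)}"

end

theory Submission
  imports Defs
begin


definition inv_at :: "enat \<Rightarrow> nat \<Rightarrow> (nat \<Rightarrow> opinion) \<Rightarrow> bool" where
  "inv_at n t f \<longleftrightarrow> f 0 = Pos \<and> (\<forall>i\<ge>1. (f i \<noteq> Bot \<longleftrightarrow> i \<le> t \<and> enat i \<le> n))"

definition EE :: "nat \<Rightarrow> (nat \<Rightarrow> opinion) \<Rightarrow> bool" where
  "EE s f \<longleftrightarrow> (\<forall>j\<le>s. f j = Pos)"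

lemma inv_nonBot: "inv_at n t f \<Longrightarrow> 1 \<le> i \<Longrightarrow> i \<le> t \<Longrightarrow> enat i \<le> n \<Longrightarrow> f i \<noteq> Bot"
  unfolding inv_at_def by blast

lemma inv_Bot: "inv_at n t f \<Longrightarrow> 1 \<le> i \<Longrightarrow> f i \<noteq> Bot \<Longrightarrow> i \<le> t \<and> enat i \<le> n"
  unfolding inv_at_def by blast

lemma inv_0: "inv_at n t f \<Longrightarrow> f 0 = Pos"
  unfolding inv_at_def by blast

lemma enat_le_trans: "enat j \<le> n \<Longrightarrow> i \<le> j \<Longrightarrow> enat i \<le> n"
  by (meson enat_ord_simps(1) order_trans)

lemma act_set_eq:
  assumes "inv_at n t f"
  shows "{i. 1 \<le> i \<and> enat i \<le> n \<and> (f i \<noteq> Bot \<or> f (i - 1) \<noteq> Bot)} = {i. 1 \<le> i \<and> i \<le> Suc t \<and> enat i \<le> n}"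
proof (intro set_eqI iffI)
  fix i assume "i \<in> {i. 1 \<le> i \<and> enat i \<le> n \<and> (f i \<noteq> Bot \<or> f (i - 1) \<noteq> Bot)}"
  then have i: "1 \<le> i" "enat i \<le> n" "f i \<noteq> Bot \<or> f (i - 1) \<noteq> Bot" by auto
  have "i \<le> Suc t"
  proof (cases "i = 1")
    case False
    then have "i - 1 \<ge> 1" using i by auto
    then show ?thesis using i assms unfolding inv_at_def by force
  qed simp
  then show "i \<in> {i. 1 \<le> i \<and> i \<le> Suc t \<and> enat i \<le> n}" using i by auto
next
  fix i assume "i \<in> {i. 1 \<le> i \<and> i \<le> Suc t \<and> enat i \<le> n}"
  then have i: "1 \<le> i" "i \<le> Suc t" "enat i \<le> n" by auto
  have "f (i - 1) \<noteq> Bot"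
  proof (cases "i = 1")
    case True then show ?thesis using assms unfolding inv_at_def by auto
  next
    case False
    then have "i - 1 \<ge> 1" "i - 1 \<le> t" using i by auto
    moreover have "enat (i - 1) \<le> n" using i(3) order_trans enat_ord_simps(1) by (meson diff_le_self)
    ultimately show ?thesis using assms unfolding inv_at_def by auto
  qed
  then show "i \<in> {i. 1 \<le> i \<and> enat i \<le> n \<and> (f i \<noteq> Bot \<or> f (i - 1) \<noteq> Bot)}" using i by auto
qed

lemma set_spread_step:
  assumes "inv_at n t f" "g \<in> set_pmf (spread_step n a b f)"
  obtains h where "g = h(0 := Pos)"
    "\<And>i. 1 \<le> i \<and> i \<le> Suc t \<and> enat i \<le> n \<Longrightarrow> h i \<in> set_pmf (local_update a b f i)"
    "\<And>i. \<not> (1 \<le> i \<and> i \<le> Suc t \<and> enat i \<le> n) \<Longrightarrow> h i = Bot"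
proof -
  have fin: "finite {i. 1 \<le> i \<and> i \<le> Suc t \<and> enat i \<le> n}" by (rule finite_subset[of _ "{..Suc t}"]) auto
  from assms(2) obtain h where "g = h(0 := Pos)"
    "h \<in> set_pmf (Pi_pmf {i. 1 \<le> i \<and> i \<le> Suc t \<and> enat i \<le> n} Bot (local_update a b f))"
    unfolding spread_step_def act_set_eq[OF assms(1)] by auto
  then show ?thesis using that unfolding set_Pi_pmf[OF fin] PiE_dflt_def by auto
qed

lemma local_update_nonBot:
  assumes "inv_at n t f" "1 \<le> i" "i \<le> Suc t" "enat i \<le> n" "x \<in> set_pmf (local_update a b f i)"
  shows "x \<noteq> Bot"
proof -
  have p: "f (i - 1) \<noteq> Bot"
  proof (cases "i = 1")
    case True then show ?thesis using inv_0[OF assms(1)] by auto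
  next
    case False
    then have "i - 1 \<ge> 1" "i - 1 \<le> t" using assms by auto
    moreover have "enat (i - 1) \<le> n" using assms(4) enat_le_trans by (meson diff_le_self)
    ultimately show ?thesis using inv_nonBot[OF assms(1)] by blast
  qed
  show ?thesis
  proof (cases "f i = Bot")
    case True
    then have "x \<in> set_pmf (map_pmf (\<lambda>c. if c then flip (f (i - 1)) else f (i - 1)) (bernoulli_pmf a))"
      using assms(5) p unfolding local_update_def by simp
    then have "x = flip (f (i - 1)) \<or> x = f (i - 1)" by auto
    then show ?thesis using p by (cases "f (i - 1)") auto
  next
    case False
    then have "x \<in> set_pmf (map_pmf (\<lambda>c. if c then f (i - 1) else f i) (bernoulli_pmf b))"
      using assms(5) unfolding local_update_def by simp
    then have "x = f (i - 1) \<or> x = f i" by auto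
    then show ?thesis using p False by (elim disjE) simp_all
  qed
qed

lemma inv_step:
  assumes "inv_at n t f" "g \<in> set_pmf (spread_step n a b f)"
  shows "inv_at n (Suc t) g"
proof -
  obtain h where h: "g = h(0 := Pos)"
    "\<And>i. 1 \<le> i \<and> i \<le> Suc t \<and> enat i \<le> n \<Longrightarrow> h i \<in> set_pmf (local_update a b f i)"
    "\<And>i. \<not> (1 \<le> i \<and> i \<le> Suc t \<and> enat i \<le> n) \<Longrightarrow> h i = Bot"
    using set_spread_step[OF assms] by blast
  show ?thesis unfolding inv_at_def
  proof (intro conjI allI impI)
    show "g 0 = Pos" using h by simp
    fix i :: nat assume "1 \<le> i"
    show "(g i \<noteq> Bot) = (i \<le> Suc t \<and> enat i \<le> n)"
    proof (cases "i \<le> Suc t \<and> enat i \<le> n")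
      case True
      then have "h i \<in> set_pmf (local_update a b f i)" using h(2) \<open>1 \<le> i\<close> by auto
      then have "h i \<noteq> Bot" using local_update_nonBot[OF assms(1), of i "h i" a b] True \<open>1 \<le> i\<close> by auto
      then show ?thesis using True h(1) \<open>1 \<le> i\<close> by auto
    next
      case False
      then show ?thesis using h(1,3) \<open>1 \<le> i\<close> by auto
    qed
  qed
qed

lemma inv_dist: "f \<in> set_pmf (spread_dist n a b t) \<Longrightarrow> inv_at n t f"
proof (induction t arbitrary: f)
  case 0
  then show ?case by (auto simp: inv_at_def spread_init_def)
next
  case (Suc t)
  then show ?case using inv_step[of n t] by fastforce
qed

lemma EE_step:
  assumes "inv_at n t f" "g \<in> set_pmf (spread_step n a b f)" "EE k f" "enat k \<le> n"
  shows "EE k g"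
proof -
  obtain h where h: "g = h(0 := Pos)"
    "\<And>i. 1 \<le> i \<and> i \<le> Suc t \<and> enat i \<le> n \<Longrightarrow> h i \<in> set_pmf (local_update a b f i)"
    "\<And>i. \<not> (1 \<le> i \<and> i \<le> Suc t \<and> enat i \<le> n) \<Longrightarrow> h i = Bot"
    using set_spread_step[OF assms(1,2)] by blast
  show ?thesis unfolding EE_def
  proof (intro allI impI)
    fix j assume j: "j \<le> k"
    show "g j = Pos"
    proof (cases "j = 0")
      case True then show ?thesis using h by simp
    next
      case False
      have fj: "f j = Pos" "f (j - 1) = Pos" using assms(3) j unfolding EE_def by auto
      have jn: "enat j \<le> n" using assms(4) j order_trans enat_ord_simps(1) by metis
      have "j \<ge> 1" using False by simp
      then have "(f j \<noteq> Bot) = (j \<le> t \<and> enat j \<le> n)" using assms(1) unfolding inv_at_def by blast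
      then have "j \<le> t" using fj by simp
      then have "h j \<in> set_pmf (local_update a b f j)" using h(2) False jn by auto
      then have "h j = Pos" using fj unfolding local_update_def by auto
      then show ?thesis using h False by simp
    qed
  qed
qed


lemma measure_bind_pmf': "measure_pmf.prob (bind_pmf M N) X = (\<integral>x. measure_pmf.prob (N x) X \<partial>M)"
proof -
  have "ennreal (measure_pmf.prob (bind_pmf M N) X) = emeasure (bind_pmf M N) X"
    by (simp add: measure_pmf.emeasure_eq_measure)
  also have "\<dots> = (\<integral>\<^sup>+x. emeasure (N x) X \<partial>M)" by simp
  also have "\<dots> = (\<integral>\<^sup>+x. ennreal (measure_pmf.prob (N x) X) \<partial>M)"
    by (simp add: measure_pmf.emeasure_eq_measure)
  also have "\<dots> = ennreal (\<integral>x. measure_pmf.prob (N x) X \<partial>M)"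
    by (intro nn_integral_eq_integral measure_pmf.integrable_const_bound[where B=1]) auto
  finally show ?thesis
    by (subst (asm) ennreal_inj) (auto intro: integral_nonneg)
qed

lemma EE_advance:
  assumes inv: "inv_at n t f" and E: "EE s f" and sn: "enat (Suc s) \<le> n" and st: "Suc s \<le> t"
    and b: "0 \<le> b" "b \<le> 1"
  shows "measure_pmf.prob (spread_step n a b f) {g. EE (Suc s) g} \<ge> b"
proof -
  define S where "S = spread_step n a b f"
  have sn': "enat s \<le> n" using sn enat_le_trans by (meson le_SucI order_refl)
  have sub: "{g. g (Suc s) = Pos} \<inter> set_pmf S \<subseteq> {g. EE (Suc s) g}"
  proof
    fix g assume g: "g \<in> {g. g (Suc s) = Pos} \<inter> set_pmf S"
    then have "EE s g" using EE_step[OF inv _ E sn'] unfolding S_def by blast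
    then show "g \<in> {g. EE (Suc s) g}" using g unfolding EE_def by (auto simp: le_Suc_eq)
  qed
  have fin: "finite {i. 1 \<le> i \<and> i \<le> Suc t \<and> enat i \<le> n}"
    by (rule finite_subset[of _ "{..Suc t}"]) auto
  have "map_pmf (\<lambda>g. g (Suc s)) S = map_pmf (\<lambda>g. g (Suc s))
          (Pi_pmf {i. 1 \<le> i \<and> i \<le> Suc t \<and> enat i \<le> n} Bot (local_update a b f))"
    unfolding S_def spread_step_def act_set_eq[OF inv] map_pmf_comp by simp
  also have "\<dots> = local_update a b f (Suc s)"
    using st sn by (subst Pi_pmf_component[OF fin]) auto
  also have "\<dots> = map_pmf (\<lambda>c. if c then Pos else f (Suc s)) (bernoulli_pmf b)"
  proof -
    have "f (Suc s) \<noteq> Bot" using inv_nonBot[OF inv _ st sn] by simp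
    moreover have "f (Suc s - 1) = Pos" using E unfolding EE_def by simp
    ultimately show ?thesis unfolding local_update_def diff_Suc_1 by (simp cong: if_cong)
  qed
  finally have M: "map_pmf (\<lambda>g. g (Suc s)) S = map_pmf (\<lambda>c. if c then Pos else f (Suc s)) (bernoulli_pmf b)" .
  have "b = measure_pmf.prob (bernoulli_pmf b) {True}"
    using b by (simp add: measure_pmf_single)
  also have "\<dots> \<le> measure_pmf.prob (bernoulli_pmf b) ((\<lambda>c. if c then Pos else f (Suc s)) -` {Pos})"
    by (intro measure_pmf.finite_measure_mono) auto
  also have "\<dots> = measure_pmf.prob (map_pmf (\<lambda>g. g (Suc s)) S) {Pos}"
    unfolding M by simp
  also have "\<dots> = measure_pmf.prob S {g. g (Suc s) = Pos}"
    by (simp add: vimage_def)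
  also have "\<dots> = measure_pmf.prob S ({g. g (Suc s) = Pos} \<inter> set_pmf S)"
    by (simp add: measure_Int_set_pmf)
  also have "\<dots> \<le> measure_pmf.prob S {g. EE (Suc s) g}"
    by (intro measure_pmf.finite_measure_mono sub) auto
  finally show ?thesis unfolding S_def .
qed


lemma prob_ge_one:
  assumes "set_pmf M \<subseteq> X"
  shows "measure_pmf.prob M X = 1"
proof -
  have "measure_pmf.prob M X \<ge> measure_pmf.prob M (UNIV \<inter> set_pmf M)"
    using assms by (intro measure_pmf.finite_measure_mono) auto
  also have "measure_pmf.prob M (UNIV \<inter> set_pmf M) = 1"
    by (metis measure_Int_set_pmf measure_pmf.prob_space space_measure_pmf)
  finally show ?thesis using measure_pmf.prob_le_1[of M X] by linarith
qed

lemma P_zero: "measure_pmf.prob (spread_dist n a b t) {f. EE 0 f} = 1"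
  by (rule prob_ge_one) (auto simp: EE_def dest: inv_dist inv_0)

lemma dist_step_bound:
  assumes b: "0 \<le> b" "b \<le> 1" and sn: "enat (Suc s) \<le> n" and st: "Suc s \<le> t"
  shows "measure_pmf.prob (spread_dist n a b (Suc t)) {f. EE (Suc s) f} \<ge>
     b * measure_pmf.prob (spread_dist n a b t) {f. EE s f}
     + (1 - b) * measure_pmf.prob (spread_dist n a b t) {f. EE (Suc s) f}"
proof -
  define D where "D = spread_dist n a b t"
  define h where "h = (\<lambda>f. b * indicator {f. EE s f} f + (1 - b) * indicator {f. EE (Suc s) f} f :: real)"
  have "b * measure_pmf.prob D {f. EE s f} + (1 - b) * measure_pmf.prob D {f. EE (Suc s) f} = (\<integral>f. h f \<partial>D)"
    unfolding h_def
    by (subst Bochner_Integration.integral_add)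
       (auto intro!: measure_pmf.integrable_const_bound[where B=1] simp: measure_pmf.emeasure_eq_measure)
  also have "\<dots> \<le> (\<integral>f. measure_pmf.prob (spread_step n a b f) {g. EE (Suc s) g} \<partial>D)"
  proof (rule integral_mono_AE)
    show "integrable (measure_pmf D) h" unfolding h_def
      by (intro measure_pmf.integrable_const_bound[where B="\<bar>b\<bar> + \<bar>1 - b\<bar>"])
         (auto simp: indicator_def)
    show "integrable (measure_pmf D) (\<lambda>f. measure_pmf.prob (spread_step n a b f) {g. EE (Suc s) g})"
      by (intro measure_pmf.integrable_const_bound[where B=1]) auto
    show "AE f in measure_pmf D. h f \<le> measure_pmf.prob (spread_step n a b f) {g. EE (Suc s) g}"
      unfolding AE_measure_pmf_iff
    proof
      fix f assume "f \<in> set_pmf D"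
      then have inv: "inv_at n t f" unfolding D_def by (rule inv_dist)
      show "h f \<le> measure_pmf.prob (spread_step n a b f) {g. EE (Suc s) g}"
      proof (cases "EE (Suc s) f")
        case True
        then have "EE s f" unfolding EE_def by auto
        have "measure_pmf.prob (spread_step n a b f) {g. EE (Suc s) g} = 1"
          using EE_step[OF inv _ True sn] by (intro prob_ge_one) auto
        then show ?thesis using True \<open>EE s f\<close> unfolding h_def by simp
      next
        case False
        show ?thesis
        proof (cases "EE s f")
          case True
          then show ?thesis using False EE_advance[OF inv True sn st b] unfolding h_def by simp
        next
          case False
          then have "\<not> EE (Suc s) f" unfolding EE_def using le_SucI by blast
          then show ?thesis using False unfolding h_def by simp
        qed
      qed
    qed
  qed
  also have "\<dots> = measure_pmf.prob (spread_dist n a b (Suc t)) {f. EE (Suc s) f}"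
    unfolding D_def by (simp add: measure_bind_pmf')
  finally show ?thesis unfolding D_def .
qed

lemma binom_rec:
  assumes b: "0 \<le> b" "b \<le> 1"
  shows "measure_pmf.prob (binomial_pmf (Suc m) b) {k. Suc s \<le> k} =
     b * measure_pmf.prob (binomial_pmf m b) {k. s \<le> k} + (1 - b) * measure_pmf.prob (binomial_pmf m b) {k. Suc s \<le> k}"
proof -
  have eq: "(binomial_pmf m b \<bind> (\<lambda>k. return_pmf (g k))) = map_pmf g (binomial_pmf m b)" for g :: "nat \<Rightarrow> nat"
    by (simp add: map_pmf_def)
  show ?thesis
    using b unfolding binomial_pmf_Suc[OF atLeastAtMost_iff[THEN iffD2, OF conjI[OF b]]]
    by (simp add: measure_bind_pmf' eq vimage_def algebra_simps)
qed

lemma binom_zero: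
  assumes "0 < b" "b < 1" "m < s"
  shows "measure_pmf.prob (binomial_pmf m b) {k. s \<le> k} = 0"
proof -
  have "measure_pmf.prob (binomial_pmf m b) {k. s \<le> k} = measure_pmf.prob (binomial_pmf m b) ({k. s \<le> k} \<inter> set_pmf (binomial_pmf m b))"
    by (simp add: measure_Int_set_pmf)
  also have "{k. s \<le> k} \<inter> set_pmf (binomial_pmf m b) = {}" using assms by auto
  finally show ?thesis by simp
qed

lemma dominance_EE:
  assumes "0 < b" "b < 1"
  shows "enat s \<le> n \<Longrightarrow> measure_pmf.prob (binomial_pmf m b) {k. s \<le> k} \<le> measure_pmf.prob (spread_dist n a b (Suc m)) {f. EE s f}"
proof (induction m arbitrary: s)
  case 0
  show ?case
  proof (cases s)
    case 0 then show ?thesis using P_zero measure_pmf.prob_le_1 by metis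
  next
    case (Suc s') then show ?thesis using binom_zero[OF assms, of 0 s] by simp
  qed
next
  case (Suc m)
  show ?case
  proof (cases s)
    case 0 then show ?thesis using P_zero measure_pmf.prob_le_1 by metis
  next
    case (Suc s')
    show ?thesis
    proof (cases "Suc m < s")
      case True then show ?thesis using binom_zero[OF assms True] by simp
    next
      case False
      have s'n: "enat s' \<le> n" using Suc.prems Suc enat_le_trans by (metis le_SucI order_refl)
      have "measure_pmf.prob (binomial_pmf (Suc m) b) {k. s \<le> k} =
         b * measure_pmf.prob (binomial_pmf m b) {k. s' \<le> k} + (1 - b) * measure_pmf.prob (binomial_pmf m b) {k. Suc s' \<le> k}"
        using Suc binom_rec[of b m s'] assms by simp
      also have "\<dots> \<le> b * measure_pmf.prob (spread_dist n a b (Suc m)) {f. EE s' f}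
          + (1 - b) * measure_pmf.prob (spread_dist n a b (Suc m)) {f. EE (Suc s') f}"
        using Suc.IH[OF s'n] Suc.IH[of "Suc s'"] Suc.prems Suc assms
        by (intro add_mono mult_left_mono) auto
      also have "\<dots> \<le> measure_pmf.prob (spread_dist n a b (Suc (Suc m))) {f. EE (Suc s') f}"
        using dist_step_bound[of b s' n "Suc m" a] Suc.prems Suc False assms by simp
      finally show ?thesis using Suc by simp
    qed
  qed
qed


lemma frontier_ge:
  assumes inv: "inv_at n t f" and E: "EE s f" and sn: "enat s \<le> n"
  shows "s \<le> truth_frontier n f"
proof -
  have "{i. enat i \<le> n \<and> (\<forall>j\<le>i. f j = Pos)} \<subseteq> {..t}"
  proof
    fix i assume i: "i \<in> {i. enat i \<le> n \<and> (\<forall>j\<le>i. f j = Pos)}"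
    show "i \<in> {..t}"
    proof (cases "i = 0")
      case False
      then have "f i \<noteq> Bot" using i by auto
      then show ?thesis using inv_Bot[OF inv, of i] False by auto
    qed simp
  qed
  then have "finite {i. enat i \<le> n \<and> (\<forall>j\<le>i. f j = Pos)}" by (rule finite_subset) simp
  moreover have "s \<in> {i. enat i \<le> n \<and> (\<forall>j\<le>i. f j = Pos)}" using E sn unfolding EE_def by auto
  ultimately show ?thesis unfolding truth_frontier_def by (rule Max_ge)
qed

lemma part1:
  assumes b: "0 < b" "b < 1" and t: "t \<ge> 1"
  shows "measure_pmf.prob (spread_dist n a b t) {f. x \<le> real (truth_frontier n f)}
            \<ge> measure_pmf.prob (binomial_pmf (t - 1) b)
                 {k. ereal x \<le> min (ereal (real k)) (ereal_of_enat n)}"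
proof (cases "x \<le> 0")
  case True
  then have "{f. x \<le> real (truth_frontier n f)} = UNIV" by auto
  then show ?thesis using measure_pmf.prob_le_1
    by (metis measure_pmf.prob_space space_measure_pmf)
next
  case False
  define s where "s = nat \<lceil>x\<rceil>"
  have xs: "x \<le> real k \<longleftrightarrow> s \<le> k" for k
    unfolding s_def using False by (simp add: nat_le_iff ceiling_le_iff)
  have tt: "Suc (t - 1) = t" using t by simp
  show ?thesis
  proof (cases "enat s \<le> n")
    case True
    have "measure_pmf.prob (binomial_pmf (t - 1) b) {k. ereal x \<le> min (ereal (real k)) (ereal_of_enat n)}
        \<le> measure_pmf.prob (binomial_pmf (t - 1) b) {k. s \<le> k}"
      by (intro measure_pmf.finite_measure_mono) (auto simp: xs[symmetric])
    also have "\<dots> \<le> measure_pmf.prob (spread_dist n a b t) {f. EE s f}"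
      using dominance_EE[OF b True, of "t - 1" a] tt by simp
    also have "\<dots> = measure_pmf.prob (spread_dist n a b t) ({f. EE s f} \<inter> set_pmf (spread_dist n a b t))"
      by (simp add: measure_Int_set_pmf)
    also have "\<dots> \<le> measure_pmf.prob (spread_dist n a b t) {f. x \<le> real (truth_frontier n f)}"
    proof (intro measure_pmf.finite_measure_mono subsetI)
      fix f assume "f \<in> {f. EE s f} \<inter> set_pmf (spread_dist n a b t)"
      then have "s \<le> truth_frontier n f" using frontier_ge[OF inv_dist _ True] by blast
      then show "f \<in> {f. x \<le> real (truth_frontier n f)}" using xs by simp
    qed simp
    finally show ?thesis .
  next
    case False
    then obtain N where N: "n = enat N" "N < s" by (cases n) auto
    then have "\<not> x \<le> real N" using xs by simp
    then have E: "{k. ereal x \<le> min (ereal (real k)) (ereal_of_enat n)} = {}" using N by auto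
    show ?thesis unfolding E measure_empty by (rule measure_nonneg)
  qed
qed




lemma powr_sq: assumes "(t::real) > 0" shows "(t powr (3/4))^2 = t * t powr (1/2)"
proof -
  have "(t powr (3/4))^2 = t powr (3/4) * t powr (3/4)" by (simp add: power2_eq_square)
  also have "\<dots> = t powr (3/4 + 3/4)" by (simp only: powr_add)
  also have "\<dots> = t powr (1 + 1/2)" by simp
  also have "\<dots> = t powr 1 * t powr (1/2)" by (simp only: powr_add)
  also have "\<dots> = t * t powr (1/2)" using assms by simp
  finally show ?thesis .
qed

lemma bin_tail:
  assumes b: "0 < b" "b < 1" and t: "t \<ge> (1::nat)"
  shows "measure_pmf.prob (binomial_pmf (t - 1) b) {k. b * real t - 2 * real t powr (1 - 1/4) \<le> real k}
         \<ge> 1 - exp (- 2 * real t powr (1/2))"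
proof -
  define r where "r = b * real t - 2 * real t powr (1 - 1/4)"
  have tp: "real t powr (3/4) \<ge> 1" using t by (intro ge_one_powr_ge_zero) auto
  have r34: "real t powr (1 - 1/4) = real t powr (3/4)" by simp
  show ?thesis
  proof (cases "t = 1")
    case True
    then have "r < 0" unfolding r_def using b by simp
    then have "{k. r \<le> real k} = UNIV" by (auto intro: order_trans[of _ 0])
    then have "measure_pmf.prob (binomial_pmf (t - 1) b) {k. r \<le> real k} = 1"
      by (metis measure_pmf.prob_space space_measure_pmf)
    moreover have "exp (- 2 * real t powr (1/2)) > 0" by simp
    ultimately show ?thesis unfolding r_def by linarith
  next
    case False
    define m where "m = t - 1"
    have m: "m > 0" "real m = real t - 1" using t False unfolding m_def by auto
    define \<epsilon> where "\<epsilon> = 2 * real t powr (3/4) - b"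
    have eps: "\<epsilon> \<ge> real t powr (3/4)" unfolding \<epsilon>_def using tp b by simp
    have rm: "r = real m * b - \<epsilon>" unfolding r_def \<epsilon>_def r34 m(2) by (simp add: algebra_simps)
    have "measure_pmf.prob (binomial_pmf m b) {k. real k < r} \<le> measure_pmf.prob (binomial_pmf m b) {k. real k \<le> real m * b - \<epsilon>}"
      unfolding rm by (intro measure_pmf.finite_measure_mono) auto
    also have "\<dots> \<le> exp (- 2 * \<epsilon>\<^sup>2 / real m)"
      by (rule binomial_distribution.prob_le) (use b m eps tp in \<open>auto simp: binomial_distribution_def\<close>)
    also have "\<dots> \<le> exp (- 2 * real t powr (1/2))"
    proof -
      have "\<epsilon>\<^sup>2 \<ge> (real t powr (3/4))^2" using eps tp by (intro power_mono) auto
      then have e2: "\<epsilon>\<^sup>2 \<ge> real t * real t powr (1/2)" using powr_sq[of "real t"] t by simp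
      have "real t powr (1/2) = real t * real t powr (1/2) / real t" using t by simp
      also have "\<dots> \<le> \<epsilon>\<^sup>2 / real t" using e2 t by (intro divide_right_mono) auto
      also have "\<dots> \<le> \<epsilon>\<^sup>2 / real m" using m by (intro divide_left_mono) auto
      finally show ?thesis by simp
    qed
    finally have le: "measure_pmf.prob (binomial_pmf m b) {k. real k < r} \<le> exp (- 2 * real t powr (1/2))" .
    have "measure_pmf.prob (binomial_pmf m b) {k. r \<le> real k} = 1 - measure_pmf.prob (binomial_pmf m b) {k. real k < r}"
    proof -
      have "{k. r \<le> real k} = UNIV - {k. real k < r}" by auto
      then show ?thesis using measure_pmf.prob_compl[of "{k. real k < r}" "binomial_pmf m b"] by simp
    qed
    then show ?thesis using le unfolding m_def r_def by linarith
  qed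
qed

theorem mainTheorem1:
  fixes a b :: real
  assumes "0 < a" "a < 1" "0 < b" "b < 1"
  shows "(\<forall>(n::enat) (t::nat) (x::real). t \<ge> 1 \<longrightarrow>
            measure_pmf.prob (spread_dist n a b t) {f. x \<le> real (truth_frontier n f)}
            \<ge> measure_pmf.prob (binomial_pmf (t - 1) b)
                 {k. ereal x \<le> min (ereal (real k)) (ereal_of_enat n)})
       \<and> (\<exists>K c1 c2 c3 :: real. K > 0 \<and> c1 > 0 \<and> c2 > 0 \<and> c3 > 0 \<and>
            (\<forall>(n::enat) (t::nat). t \<ge> 1 \<longrightarrow>
              measure_pmf.prob (spread_dist n a b t)
                {f. min (ereal (b * real t - K * real t powr (1 - c3))) (ereal_of_enat n)
                      \<le> ereal (real (truth_frontier n f))}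
              \<ge> 1 - exp (- c1 * real t powr c2)))"
proof (intro conjI)
  show "\<forall>(n::enat) (t::nat) (x::real). t \<ge> 1 \<longrightarrow>
            measure_pmf.prob (spread_dist n a b t) {f. x \<le> real (truth_frontier n f)}
            \<ge> measure_pmf.prob (binomial_pmf (t - 1) b)
                 {k. ereal x \<le> min (ereal (real k)) (ereal_of_enat n)}"
    using part1[OF assms(3,4)] by blast
  show "\<exists>K c1 c2 c3 :: real. K > 0 \<and> c1 > 0 \<and> c2 > 0 \<and> c3 > 0 \<and>
            (\<forall>(n::enat) (t::nat). t \<ge> 1 \<longrightarrow>
              measure_pmf.prob (spread_dist n a b t)
                {f. min (ereal (b * real t - K * real t powr (1 - c3))) (ereal_of_enat n)
                      \<le> ereal (real (truth_frontier n f))}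
              \<ge> 1 - exp (- c1 * real t powr c2))"
  proof (rule exI[of _ 2], rule exI[of _ 2], rule exI[of _ "1/2"], rule exI[of _ "1/4"], intro conjI allI impI)
    fix n :: enat and t :: nat assume t: "t \<ge> 1"
    define r where "r = b * real t - 2 * real t powr (1 - 1/4)"
    obtain y where y: "min (ereal r) (ereal_of_enat n) = ereal y" "y \<le> r"
        "\<And>N. n = enat N \<Longrightarrow> y \<le> real N"
    proof (cases n)
      case (enat N)
      then show ?thesis using that[of "min r (real N)"] by (simp add: min_def)
    next
      case infinity
      then show ?thesis using that[of r] by simp
    qed
    have "1 - exp (- 2 * real t powr (1/2))
        \<le> measure_pmf.prob (binomial_pmf (t - 1) b) {k. r \<le> real k}"
      using bin_tail[OF assms(3,4) t] unfolding r_def .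
    also have "\<dots> \<le> measure_pmf.prob (binomial_pmf (t - 1) b)
                 {k. ereal y \<le> min (ereal (real k)) (ereal_of_enat n)}"
    proof (intro measure_pmf.finite_measure_mono subsetI)
      fix k assume "k \<in> {k. r \<le> real k}"
      then have "y \<le> real k" using y(2) by simp
      moreover have "ereal y \<le> ereal_of_enat n" using y(3) by (cases n) auto
      ultimately show "k \<in> {k. ereal y \<le> min (ereal (real k)) (ereal_of_enat n)}" by simp
    qed simp
    also have "\<dots> \<le> measure_pmf.prob (spread_dist n a b t) {f. y \<le> real (truth_frontier n f)}"
      using part1[OF assms(3,4) t] .
    also have "{f. y \<le> real (truth_frontier n f)} =
        {f. min (ereal (b * real t - 2 * real t powr (1 - 1/4))) (ereal_of_enat n) \<le> ereal (real (truth_frontier n f))}"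
      using y(1) unfolding r_def by simp
    finally show "measure_pmf.prob (spread_dist n a b t)
                {f. min (ereal (b * real t - 2 * real t powr (1 - 1/4))) (ereal_of_enat n)
                      \<le> ereal (real (truth_frontier n f))}
              \<ge> 1 - exp (- 2 * real t powr (1/2))" .
  qed auto
qed

end
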